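(* Let $2\le r_1<r_2$ be integers, let $T=[h,q_1,q_2]\in\mathfrak{F}(n)$ with $h\ge3$, and let $\tilde T=[h',q_1',q_2']$ where either $h'=h-1$, $q_1'=q_1+1$, $q_2'=q_2$, or $h'=h-1$, $q_1'=q_1$, $q_2'=q_2+1$. Then $\rho(T)>\rho(\tilde T)$.
   Context: $\rho(G)$ denotes the spectral radius (largest eigenvalue of the adjacency matrix) of a graph $G$. For integers $h,q_1,q_2\ge 1$ and fixed integers $2\le r_1<r_2$, the tree $[h,q_1,q_2]$ is constructed as follows: take a vertex $u$; attach to $u$ a pendant path with $h$ edges; attach to $u$ a path with $q_1$ edges ending at a vertex $v_1$, and attach to $v_1$ exactly $r_1$ pendant paths with $2$ edges each; attach to $u$ a path with $q_2$ edges ending at a vertex $v_2$, and attach to $v_2$ exactly $r_2$ pendant paths with $2$ edges each. It has $n=1+h+q_1+q_2+2(r_1+r_2)$ vertices. $\mathfrak{F}(n)$ is the set of all such trees $[h,q_1,q_2]$ with $h,q_1,q_2\ge2$ and $h+q_1+q_2=n-1-2(r_1+r_2)$. The tree $\tilde T$ is obtained from $T$ by a 2-switch (removing two edges $ab,cd$ with $ac,bd$ non-edges and adding $ac,bd$), so it has the same degree sequence. *)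

theory Defs
  imports "Jordan_Normal_Form.Spectral_Radius"
begin

text \<open>Labelling:
  u = 0; pendant path 0-1-...-h;
  path 0-(h+1)-...-(h+q1), v1 = h+q1;
  path 0-(h+q1+1)-...-(h+q1+q2), v2 = h+q1+q2;
  for i < r1: edges v1-(b1+2i), (b1+2i)-(b1+2i+1), where b1 = h+q1+q2+1;
  for i < r2: edges v2-(b2+2i), (b2+2i)-(b2+2i+1), where b2 = b1+2 r1.\<close>

definition tree_order :: "nat \<Rightarrow> nat \<Rightarrow> nat \<Rightarrow> nat \<Rightarrow> nat \<Rightarrow> nat" where
  "tree_order r1 r2 h q1 q2 = 1 + h + q1 + q2 + 2 * (r1 + r2)"

definition tree_edges :: "nat \<Rightarrow> nat \<Rightarrow> nat \<Rightarrow> nat \<Rightarrow> nat \<Rightarrow> (nat \<times> nat) set" where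
  "tree_edges r1 r2 h q1 q2 =
     (let v1 = h + q1; v2 = h + q1 + q2; b1 = h + q1 + q2 + 1; b2 = b1 + 2 * r1 in
      {(i, i + 1) | i. i < h}
      \<union> {(0, h + 1) | _::unit. q1 \<ge> 1}
      \<union> {(h + i, h + i + 1) | i. 1 \<le> i \<and> i < q1}
      \<union> {(0, v1 + 1) | _::unit. q2 \<ge> 1}
      \<union> {(v1 + i, v1 + i + 1) | i. 1 \<le> i \<and> i < q2}
      \<union> {(v1, b1 + 2 * i) | i. i < r1} \<union> {(b1 + 2 * i, b1 + 2 * i + 1) | i. i < r1}
      \<union> {(v2, b2 + 2 * i) | i. i < r2} \<union> {(b2 + 2 * i, b2 + 2 * i + 1) | i. i < r2})"

definition tree_adj :: "nat \<Rightarrow> nat \<Rightarrow> nat \<Rightarrow> nat \<Rightarrow> nat \<Rightarrow> nat \<Rightarrow> nat \<Rightarrow> bool" where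
  "tree_adj r1 r2 h q1 q2 i j =
     ((i, j) \<in> tree_edges r1 r2 h q1 q2 \<or> (j, i) \<in> tree_edges r1 r2 h q1 q2)"

text \<open>Adjacency matrix (over the complex numbers, so that the library spectral radius applies).\<close>
definition tree_adj_mat :: "nat \<Rightarrow> nat \<Rightarrow> nat \<Rightarrow> nat \<Rightarrow> nat \<Rightarrow> complex mat" where
  "tree_adj_mat r1 r2 h q1 q2 =
     mat (tree_order r1 r2 h q1 q2) (tree_order r1 r2 h q1 q2)
       (\<lambda>(i, j). if tree_adj r1 r2 h q1 q2 i j then 1 else 0)"

definition tree_rho :: "nat \<Rightarrow> nat \<Rightarrow> nat \<Rightarrow> nat \<Rightarrow> nat \<Rightarrow> real" where
  "tree_rho r1 r2 h q1 q2 = spectral_radius (tree_adj_mat r1 r2 h q1 q2)"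

end

theory Submission
  imports Defs
begin


lemma edge_iff1:
  assumes "1 \<le> q1" "1 \<le> q2" "(i,j) \<in> tree_edges r1 r2 h q1 q2"
  shows 
  "(j = Suc i \<and> (i < h \<or> (h < i \<and> i < h+q1) \<or> (h+q1 < i \<and> i < h+q1+q2) \<or>
      (h+q1+q2 < i \<and> i < h+q1+q2+1+2*(r1+r2) \<and> even (i - (h+q1+q2+1)))))
  \<or> (i = 0 \<and> (j = h+1 \<or> j = h+q1+1))
  \<or> (i = h+q1 \<and> h+q1+q2 < j \<and> j < h+q1+q2+1+2*r1 \<and> even (j - (h+q1+q2+1)))
  \<or> (i = h+q1+q2 \<and> h+q1+q2+2*r1 < j \<and> j < h+q1+q2+1+2*(r1+r2) \<and> even (j - (h+q1+q2+1+2*r1)))"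
  using assms(3) unfolding tree_edges_def Let_def
  apply (elim UnE)
  apply simp_all
  apply (elim exE conjE; simp)+
  done



lemma edge_iff2:
  assumes q: "1 \<le> q1" "1 \<le> q2" and R:
  "(j = Suc i \<and> (i < h \<or> (h < i \<and> i < h+q1) \<or> (h+q1 < i \<and> i < h+q1+q2) \<or>
      (h+q1+q2 < i \<and> i < h+q1+q2+1+2*(r1+r2) \<and> even (i - (h+q1+q2+1)))))
  \<or> (i = 0 \<and> (j = h+1 \<or> j = h+q1+1))
  \<or> (i = h+q1 \<and> h+q1+q2 < j \<and> j < h+q1+q2+1+2*r1 \<and> even (j - (h+q1+q2+1)))
  \<or> (i = h+q1+q2 \<and> h+q1+q2+2*r1 < j \<and> j < h+q1+q2+1+2*(r1+r2) \<and> even (j - (h+q1+q2+1+2*r1)))"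
  shows "(i,j) \<in> tree_edges r1 r2 h q1 q2"
proof -
  define b1 where "b1 = h+q1+q2+1"
  define b2 where "b2 = b1 + 2*r1"
  have E: "tree_edges r1 r2 h q1 q2 = 
      {(i, i + 1) | i. i < h}
      \<union> {(0, h + 1) | _::unit. q1 \<ge> 1}
      \<union> {(h + i, h + i + 1) | i. 1 \<le> i \<and> i < q1}
      \<union> {(0, h+q1 + 1) | _::unit. q2 \<ge> 1}
      \<union> {(h+q1 + i, h+q1 + i + 1) | i. 1 \<le> i \<and> i < q2}
      \<union> {(h+q1, b1 + 2 * i) | i. i < r1} \<union> {(b1 + 2 * i, b1 + 2 * i + 1) | i. i < r1}
      \<union> {(h+q1+q2, b2 + 2 * i) | i. i < r2} \<union> {(b2 + 2 * i, b2 + 2 * i + 1) | i. i < r2}" (is "_ = ?E")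
    unfolding tree_edges_def Let_def b1_def b2_def by simp
  show ?thesis unfolding E
  proof (use R in \<open>elim disjE conjE\<close>)
    assume "j = Suc i" "i < h" thus "(i, j) \<in> ?E" by auto
  next
    assume a: "j = Suc i" "h < i" "i < h+q1"
    hence "(i,j) = (h + (i-h), h + (i-h) + 1) \<and> 1 \<le> i - h \<and> i - h < q1" by auto
    thus "(i, j) \<in> ?E" by auto
  next
    assume a: "j = Suc i" "h+q1 < i" "i < h+q1+q2"
    hence "(i,j) = (h+q1 + (i-(h+q1)), h+q1 + (i-(h+q1)) + 1) \<and> 1 \<le> i - (h+q1) \<and> i - (h+q1) < q2" by auto
    thus "(i, j) \<in> ?E" by auto
  next
    assume a: "j = Suc i" "h+q1+q2 < i" "i < h+q1+q2+1+2*(r1+r2)" "even (i - (h+q1+q2+1))"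
    from a(4) obtain k where k: "i - b1 = 2*k" unfolding b1_def by (rule evenE)
    have ib: "i = b1 + 2*k" using k a(2) unfolding b1_def by auto
    show "(i, j) \<in> ?E"
    proof (cases "k < r1")
      case True
      hence "(i,j) = (b1 + 2*k, b1+2*k+1) \<and> k < r1" using ib a(1) by auto
      thus ?thesis by auto
    next
      case False
      hence "(i,j) = (b2 + 2*(k-r1), b2+2*(k-r1)+1) \<and> k - r1 < r2" using ib a(1) a(3)
        unfolding b2_def b1_def by auto
      thus ?thesis by auto
    qed
  next
    assume "i = 0" "j = h+1" thus "(i, j) \<in> ?E" using q by auto
  next
    assume "i = 0" "j = h+q1+1" thus "(i, j) \<in> ?E" using q by auto
  next
    assume a: "i = h+q1" "h+q1+q2 < j" "j < h+q1+q2+1+2*r1" "even (j - (h+q1+q2+1))"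
    from a(4) obtain k where k: "j - b1 = 2*k" unfolding b1_def by (rule evenE)
    hence "(i,j) = (h+q1, b1 + 2*k) \<and> k < r1" using a unfolding b1_def by auto
    thus "(i, j) \<in> ?E" by auto
  next
    assume a: "i = h+q1+q2" "h+q1+q2+2*r1 < j" "j < h+q1+q2+1+2*(r1+r2)" "even (j - (h+q1+q2+1+2*r1))"
    from a(4) obtain k where k: "j - b2 = 2*k" unfolding b2_def b1_def by (rule evenE)
    hence "(i,j) = (h+q1+q2, b2 + 2*k) \<and> k < r2" using a unfolding b2_def b1_def by auto
    thus "(i, j) \<in> ?E" by auto
  qed
qed


lemma edge_iff:
  assumes "1 \<le> q1" "1 \<le> q2"
  shows "(i,j) \<in> tree_edges r1 r2 h q1 q2 \<longleftrightarrow> (j = Suc i \<and> (i < h \<or> (h < i \<and> i < h+q1) \<or> (h+q1 < i \<and> i < h+q1+q2) \<or>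
      (h+q1+q2 < i \<and> i < h+q1+q2+1+2*(r1+r2) \<and> even (i - (h+q1+q2+1)))))
  \<or> (i = 0 \<and> (j = h+1 \<or> j = h+q1+1))
  \<or> (i = h+q1 \<and> h+q1+q2 < j \<and> j < h+q1+q2+1+2*r1 \<and> even (j - (h+q1+q2+1)))
  \<or> (i = h+q1+q2 \<and> h+q1+q2+2*r1 < j \<and> j < h+q1+q2+1+2*(r1+r2) \<and> even (j - (h+q1+q2+1+2*r1)))"
  by (rule iffI, erule edge_iff1[OF assms], erule edge_iff2[OF assms])


definition pev :: "nat \<Rightarrow> nat \<Rightarrow> bool" where "pev a b = even (a - b)"

lemma edge_iffp:
  assumes "1 \<le> q1" "1 \<le> q2"
  shows "(i,j) \<in> tree_edges r1 r2 h q1 q2 \<longleftrightarrow> (j = Suc i \<and> (i < h \<or> (h < i \<and> i < h+q1) \<or> (h+q1 < i \<and> i < h+q1+q2) \<or>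
      (h+q1+q2 < i \<and> i < h+q1+q2+1+2*(r1+r2) \<and> pev i (h+q1+q2+1))))
  \<or> (i = 0 \<and> (j = h+1 \<or> j = h+q1+1))
  \<or> (i = h+q1 \<and> h+q1+q2 < j \<and> j < h+q1+q2+1+2*r1 \<and> pev j (h+q1+q2+1))
  \<or> (i = h+q1+q2 \<and> h+q1+q2+2*r1 < j \<and> j < h+q1+q2+1+2*(r1+r2) \<and> pev j (h+q1+q2+1+2*r1))"
  unfolding pev_def by (rule edge_iff[OF assms])

lemma pev_Suc: "b \<le> a \<Longrightarrow> pev (Suc a) b \<longleftrightarrow> \<not> pev a b"
  unfolding pev_def by (simp add: Suc_diff_le)

lemma pev_shift: "b + 2*r \<le> a \<Longrightarrow> pev a (b + 2*r) \<longleftrightarrow> pev a b"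
  unfolding pev_def
proof -
  assume "b + 2*r \<le> a"
  hence "a - b = (a - (b + 2*r)) + 2*r" by simp
  thus "even (a - (b + 2 * r)) = even (a - b)" by simp
qed


context
  fixes ra rb h q1 q2 :: nat
  assumes hq: "2 \<le> h" "2 \<le> q1" "2 \<le> q2"
begin

lemma adjC0: "tree_adj ra rb h q1 q2 0 j \<longleftrightarrow> j = 1 \<or> j = h+1 \<or> j = h+q1+1"
  unfolding tree_adj_def using hq by (auto simp: edge_iffp)

lemma adjC1: "1 \<le> i \<Longrightarrow> i < h \<Longrightarrow> tree_adj ra rb h q1 q2 i j \<longleftrightarrow> j = i - 1 \<or> j = i + 1"
  unfolding tree_adj_def using hq by (auto simp: edge_iffp)

lemma adjC2: "tree_adj ra rb h q1 q2 h j \<longleftrightarrow> j = h - 1"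
  unfolding tree_adj_def using hq by (auto simp: edge_iffp)

lemma adjC3: "tree_adj ra rb h q1 q2 (h+1) j \<longleftrightarrow> j = 0 \<or> j = h+2"
  unfolding tree_adj_def using hq by (auto simp: edge_iffp)

lemma adjC4: "h+1 < i \<Longrightarrow> i < h+q1 \<Longrightarrow> tree_adj ra rb h q1 q2 i j \<longleftrightarrow> j = i - 1 \<or> j = i + 1"
  unfolding tree_adj_def using hq by (auto simp: edge_iffp)

lemma adjC5: "tree_adj ra rb h q1 q2 (h+q1) j \<longleftrightarrow> j = h+q1-1 \<or> 
   (h+q1+q2 < j \<and> j < h+q1+q2+1+2*ra \<and> pev j (h+q1+q2+1))"
  unfolding tree_adj_def using hq by (auto simp: edge_iffp)

lemma adjC6: "tree_adj ra rb h q1 q2 (h+q1+1) j \<longleftrightarrow> j = 0 \<or> j = h+q1+2"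
  unfolding tree_adj_def using hq by (auto simp: edge_iffp)

lemma adjC7: "h+q1+1 < i \<Longrightarrow> i < h+q1+q2 \<Longrightarrow> tree_adj ra rb h q1 q2 i j \<longleftrightarrow> j = i - 1 \<or> j = i + 1"
  unfolding tree_adj_def using hq by (auto simp: edge_iffp)

lemma adjC8: "tree_adj ra rb h q1 q2 (h+q1+q2) j \<longleftrightarrow> j = h+q1+q2-1 \<or> 
   (h+q1+q2+2*ra < j \<and> j < h+q1+q2+1+2*(ra+rb) \<and> pev j (h+q1+q2+1+2*ra))"
  unfolding tree_adj_def using hq by (auto simp: edge_iffp)

lemma pev_self: "pev a a" unfolding pev_def by simp

lemma pev_sh: "h+q1+q2+2*ra < a \<Longrightarrow> pev a (Suc (h+q1+q2+2*ra)) \<longleftrightarrow> pev a (Suc (h+q1+q2))"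
  using pev_shift[of "Suc (h+q1+q2)" ra a] by simp

lemma adjC9: "h+q1+q2 < i \<Longrightarrow> i < h+q1+q2+1+2*ra \<Longrightarrow> pev i (h+q1+q2+1) \<Longrightarrow>
   tree_adj ra rb h q1 q2 i j \<longleftrightarrow> j = h+q1 \<or> j = i+1"
  unfolding tree_adj_def using hq by (auto simp: edge_iffp pev_Suc pev_self)

lemma adjC10: assumes "h+q1+q2 < i" "i < h+q1+q2+1+2*ra" "\<not> pev i (h+q1+q2+1)"
  shows "tree_adj ra rb h q1 q2 i j \<longleftrightarrow> j = i - 1"
proof -
  obtain k where k: "i = Suc k" using assms(1) by (cases i) auto
  have kb: "h+q1+q2 < k"
  proof (rule ccontr)
    assume "\<not> h+q1+q2 < k"
    hence "i = h+q1+q2+1" using assms(1) k by simp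
    thus False using assms(3) pev_self by simp
  qed
  have pk: "pev k (h+q1+q2+1)" using pev_Suc[of "h+q1+q2+1" k] kb assms(3) k by simp
  show ?thesis unfolding tree_adj_def using hq assms kb pk unfolding k by (auto simp: edge_iffp pev_Suc pev_self)
qed

lemma adjC11: "h+q1+q2+2*ra < i \<Longrightarrow> i < h+q1+q2+1+2*(ra+rb) \<Longrightarrow> pev i (h+q1+q2+1+2*ra) \<Longrightarrow>
   tree_adj ra rb h q1 q2 i j \<longleftrightarrow> j = h+q1+q2 \<or> j = i+1"
  unfolding tree_adj_def using hq by (auto simp: edge_iffp pev_Suc pev_self pev_sh)

lemma adjC12: assumes "h+q1+q2+2*ra < i" "i < h+q1+q2+1+2*(ra+rb)" "\<not> pev i (h+q1+q2+1+2*ra)"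
  shows "tree_adj ra rb h q1 q2 i j \<longleftrightarrow> j = i - 1"
proof -
  obtain k where k: "i = Suc k" using assms(1) by (cases i) auto
  have kb: "h+q1+q2+2*ra < k"
  proof (rule ccontr)
    assume "\<not> h+q1+q2+2*ra < k"
    hence "i = h+q1+q2+1+2*ra" using assms(1) k by simp
    thus False using assms(3) pev_self by simp
  qed
  have pk: "pev k (h+q1+q2+1+2*ra)" using pev_Suc[of "h+q1+q2+1+2*ra" k] kb assms(3) k by simp
  hence pk': "pev k (h+q1+q2+1)" using pev_sh[of k] kb by simp
  show ?thesis unfolding tree_adj_def using hq assms kb pk pk' unfolding k by (auto simp: edge_iffp pev_Suc pev_self pev_sh)
qed

end

lemma spec_upper:
  fixes M :: "complex mat" and a :: "nat \<Rightarrow> nat \<Rightarrow> real" and x :: "nat \<Rightarrow> real"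
  assumes M: "M \<in> carrier_mat n n" and n: "n > 0"
    and Ma: "\<And>i j. i < n \<Longrightarrow> j < n \<Longrightarrow> M $$ (i,j) = of_real (a i j)"
    and a0: "\<And>i j. a i j \<ge> 0"
    and xpos: "\<And>i. i < n \<Longrightarrow> x i > 0"
    and sub: "\<And>i. i < n \<Longrightarrow> (\<Sum>j<n. a i j * x j) \<le> lam * x i"
  shows "spectral_radius M \<le> lam"
proof -
  from spectral_radius_mem_max(1)[OF M n] obtain mu where mu: "mu \<in> spectrum M"
    and rho: "spectral_radius M = norm mu" by auto
  from mu obtain v where ev: "eigenvector M v mu" unfolding spectrum_def eigenvalue_def by auto
  have v: "v \<in> carrier_vec n" and vnz: "v \<noteq> 0\<^sub>v n" and Mv: "M *\<^sub>v v = mu \<cdot>\<^sub>v v"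
    using ev M unfolding eigenvector_def by auto
  have comp: "(\<Sum>j<n. M $$ (i,j) * v $ j) = mu * v $ i" if "i < n" for i
  proof -
    have "(M *\<^sub>v v) $ i = mu * v $ i" using Mv that v by simp
    moreover have "(M *\<^sub>v v) $ i = (\<Sum>j<n. M $$ (i,j) * v $ j)"
      using M v that by (simp add: mult_mat_vec_def scalar_prod_def lessThan_atLeast0)
    ultimately show ?thesis by simp
  qed
  define f where "f i = norm (v $ i) / x i" for i
  define c where "c = Max (f ` {..<n})"
  have fin: "finite (f ` {..<n})" and ne: "f ` {..<n} \<noteq> {}" using n by auto
  obtain i where i: "i < n" and fi: "f i = c" using Max_in[OF fin ne] unfolding c_def by auto
  have bound: "norm (v $ j) \<le> c * x j" if "j < n" for j
  proof -
    have "f j \<le> c" unfolding c_def using fin that by auto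
    thus ?thesis using xpos[OF that] unfolding f_def by (simp add: divide_le_eq)
  qed
  have vi: "norm (v $ i) = c * x i" using fi xpos[OF i] unfolding f_def by auto
  have cpos: "c > 0"
  proof (rule ccontr)
    assume "\<not> c > 0"
    hence "c \<le> 0" by simp
    have "v $ j = 0" if "j < n" for j
    proof -
      have "norm (v $ j) \<le> c * x j" using bound that by simp
      also have "\<dots> \<le> 0" using \<open>c \<le> 0\<close> xpos[OF that] by (simp add: mult_nonpos_nonneg)
      finally show ?thesis by simp
    qed
    hence "v = 0\<^sub>v n" using v by (intro eq_vecI) auto
    with vnz show False by simp
  qed
  have "norm mu * norm (v $ i) = norm (\<Sum>j<n. M $$ (i,j) * v $ j)"
    using comp[OF i] by (simp add: norm_mult)
  also have "\<dots> \<le> (\<Sum>j<n. norm (M $$ (i,j) * v $ j))" by (rule norm_sum)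
  also have "\<dots> = (\<Sum>j<n. a i j * norm (v $ j))"
    using Ma[OF i] a0 by (intro sum.cong) (auto simp: norm_mult)
  also have "\<dots> \<le> (\<Sum>j<n. a i j * (c * x j))"
    using bound a0 by (intro sum_mono mult_left_mono) auto
  also have "\<dots> = c * (\<Sum>j<n. a i j * x j)" by (simp add: sum_distrib_left algebra_simps)
  also have "\<dots> \<le> c * (lam * x i)" using sub[OF i] cpos by simp
  also have "\<dots> = lam * norm (v $ i)" using vi by simp
  finally have "norm mu * norm (v $ i) \<le> lam * norm (v $ i)" .
  moreover have "norm (v $ i) > 0" using vi cpos xpos[OF i] by simp
  ultimately have "norm mu \<le> lam" by simp
  thus ?thesis using rho by simp
qed

lemma spec_lower:
  fixes M :: "complex mat" and a :: "nat \<Rightarrow> nat \<Rightarrow> real" and x :: "nat \<Rightarrow> real"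
  assumes M: "M \<in> carrier_mat n n"
    and Ma: "\<And>i j. i < n \<Longrightarrow> j < n \<Longrightarrow> M $$ (i,j) = of_real (a i j)"
    and k: "k < n" and xk: "x k \<noteq> 0"
    and eq: "\<And>i. i < n \<Longrightarrow> (\<Sum>j<n. a i j * x j) = lam * x i"
  shows "spectral_radius M \<ge> \<bar>lam\<bar>"
proof -
  define v where "v = vec n (\<lambda>i. complex_of_real (x i))"
  have v: "v \<in> carrier_vec n" unfolding v_def by simp
  have vnz: "v \<noteq> 0\<^sub>v n"
  proof
    assume "v = 0\<^sub>v n"
    hence "v $ k = 0" using k by simp
    thus False using xk k unfolding v_def by simp
  qed
  have Mv: "M *\<^sub>v v = complex_of_real lam \<cdot>\<^sub>v v"
  proof (rule eq_vecI)
    fix i assume i: "i < dim_vec (complex_of_real lam \<cdot>\<^sub>v v)"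
    hence i: "i < n" unfolding v_def by simp
    have "(M *\<^sub>v v) $ i = (\<Sum>j<n. M $$ (i,j) * v $ j)"
      using M v i by (simp add: mult_mat_vec_def scalar_prod_def lessThan_atLeast0)
    also have "\<dots> = (\<Sum>j<n. complex_of_real (a i j * x j))"
      using Ma[OF i] by (intro sum.cong) (auto simp: v_def)
    also have "\<dots> = complex_of_real (\<Sum>j<n. a i j * x j)" by (simp only: of_real_sum)
    also have "\<dots> = complex_of_real (lam * x i)" using eq[OF i] by simp
    finally show "(M *\<^sub>v v) $ i = (complex_of_real lam \<cdot>\<^sub>v v) $ i" using i by (simp add: v_def)
  qed (use M v in simp)
  have "eigenvector M v (complex_of_real lam)" unfolding eigenvector_def using M v vnz Mv by simp
  hence "complex_of_real lam \<in> spectrum M" unfolding spectrum_def eigenvalue_def by auto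
  hence "norm (complex_of_real lam) \<in> norm ` spectrum M" by (rule imageI)
  hence "norm (complex_of_real lam) \<le> spectral_radius M"
    using spectral_radius_mem_max(2)[OF M] k by simp
  thus ?thesis by simp
qed


definition lam :: "real \<Rightarrow> real" where "lam t = t + 1/t"
definition cc :: "real \<Rightarrow> real" where "cc t = t - 1/t"
definition Gs :: "real \<Rightarrow> real \<Rightarrow> real \<Rightarrow> nat \<Rightarrow> real" where "Gs a b t k = a * t^k + b * (1/t)^k"
definition Pv :: "real \<Rightarrow> nat \<Rightarrow> real" where "Pv t k = Gs t (-1/t) t k"
definition al :: "nat \<Rightarrow> real \<Rightarrow> real" where "al r t = t * ((lam t)^2 - 1) - r * lam t"
definition be :: "nat \<Rightarrow> real \<Rightarrow> real" where "be r t = r * lam t - ((lam t)^2 - 1) / t"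
definition Qv :: "nat \<Rightarrow> real \<Rightarrow> nat \<Rightarrow> real" where "Qv r t k = Gs (al r t) (be r t) t k"

lemma Gs_rec: assumes "t \<noteq> 0" shows "Gs a b t (Suc (Suc k)) + Gs a b t k = lam t * Gs a b t (Suc k)"
  using assms unfolding Gs_def lam_def by (simp add: field_simps power_Suc)

lemma Gs_cross: assumes "t \<noteq> 0" shows "Gs a b t k * Gs a b t (Suc (Suc k)) - (Gs a b t (Suc k))^2 = a * b * (cc t)^2"
proof -
  have e1: "t^k * (1/t)^k = 1" using assms by (simp add: power_mult_distrib[symmetric])
  show ?thesis using assms unfolding Gs_def cc_def
    by (simp add: field_simps power_Suc power2_eq_square)
qed

lemma Pv0: "t \<noteq> 0 \<Longrightarrow> Pv t 0 = cc t" unfolding Pv_def Gs_def cc_def by simp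
lemma Pv1: "t \<noteq> 0 \<Longrightarrow> Pv t 1 = lam t * cc t" unfolding Pv_def Gs_def cc_def lam_def
  by (simp add: field_simps power2_eq_square)
lemma Pv_rec: "t \<noteq> 0 \<Longrightarrow> Pv t (Suc (Suc k)) + Pv t k = lam t * Pv t (Suc k)"
  unfolding Pv_def by (rule Gs_rec)
lemma Qv_rec: "t \<noteq> 0 \<Longrightarrow> Qv r t (Suc (Suc k)) + Qv r t k = lam t * Qv r t (Suc k)"
  unfolding Qv_def by (rule Gs_rec)
lemma Qv0: "t \<noteq> 0 \<Longrightarrow> Qv r t 0 = ((lam t)^2 - 1) * cc t"
  unfolding Qv_def Gs_def al_def be_def cc_def by (simp add: field_simps)
lemma Qv1: "t \<noteq> 0 \<Longrightarrow> Qv r t 1 + r * (lam t * cc t) = lam t * Qv r t 0"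
  unfolding Qv_def Gs_def al_def be_def cc_def lam_def by (simp add: field_simps power2_eq_square)


lemma sum_nb:
  fixes n :: nat
  assumes "finite S" "S \<subseteq> {..<n}" "\<And>j. P j \<longleftrightarrow> j \<in> S"
  shows "(\<Sum>j<n. (if P j then 1 else 0) * (x j :: real)) = sum x S"
proof -
  have "(\<Sum>j<n. (if P j then 1 else 0) * x j) = (\<Sum>j<n. if j \<in> S then x j else 0)"
    using assms(3) by (intro sum.cong) auto
  also have "\<dots> = sum x ({..<n} \<inter> S)" by (rule sum.inter_restrict[symmetric]) simp
  also have "{..<n} \<inter> S = S" using assms(2) by auto
  finally show ?thesis .
qed

lemma img_even: "(b \<le> j \<and> j < b + 2*r \<and> pev j b) \<longleftrightarrow> j \<in> (\<lambda>k::nat. b + 2*k) ` {..<r}"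
proof
  assume a: "b \<le> j \<and> j < b + 2*r \<and> pev j b"
  hence "even (j - b)" unfolding pev_def by blast
  then obtain k where k: "j - b = 2*k" by (rule evenE)
  hence "j = b + 2*k" "k < r" using a by auto
  thus "j \<in> (\<lambda>k. b + 2*k) ` {..<r}" by auto
qed (auto simp: pev_def)

lemma sum_img_const: "(\<Sum>j\<in>(\<lambda>k::nat. b + 2*k) ` {..<r}. f j) = (\<Sum>k<r. f (b + 2*k))"
  by (subst sum.reindex) (auto simp: inj_on_def)

definition vx :: "nat \<Rightarrow> nat \<Rightarrow> nat \<Rightarrow> nat \<Rightarrow> nat \<Rightarrow> real \<Rightarrow> nat \<Rightarrow> real" where
  "vx r1 r2 h q1 q2 t i = 
    (if i \<le> h then Pv t (h-i) * Qv r1 t q1 * Qv r2 t q2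
     else if i \<le> h+q1 then Qv r1 t (h+q1-i) * Pv t h * Qv r2 t q2
     else if i \<le> h+q1+q2 then Qv r2 t (h+q1+q2-i) * Pv t h * Qv r1 t q1
     else if i < h+q1+q2+1+2*r1 then (if pev i (h+q1+q2+1) then lam t * cc t else cc t) * Pv t h * Qv r2 t q2
     else (if pev i (h+q1+q2+1+2*r1) then lam t * cc t else cc t) * Pv t h * Qv r1 t q1)"

definition Ft :: "nat \<Rightarrow> nat \<Rightarrow> nat \<Rightarrow> nat \<Rightarrow> nat \<Rightarrow> real \<Rightarrow> real" where
  "Ft r1 r2 h q1 q2 t = lam t * Pv t h * Qv r1 t q1 * Qv r2 t q2 - Pv t (h-1) * Qv r1 t q1 * Qv r2 t q2
     - Qv r1 t (q1-1) * Pv t h * Qv r2 t q2 - Qv r2 t (q2-1) * Pv t h * Qv r1 t q1"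

locale trl =
  fixes r1 r2 h q1 q2 :: nat and t :: real
  assumes hq: "2 \<le> h" "2 \<le> q1" "2 \<le> q2" and t0: "t \<noteq> 0"
begin

abbreviation "x \<equiv> vx r1 r2 h q1 q2 t"
abbreviation "nn \<equiv> tree_order r1 r2 h q1 q2"
abbreviation "A \<equiv> Pv t h"
abbreviation "B1 \<equiv> Qv r1 t q1"
abbreviation "B2 \<equiv> Qv r2 t q2"

lemma nn_eq: "nn = h+q1+q2+1+2*(r1+r2)" unfolding tree_order_def by simp

lemmas adj = adjC0[OF hq] adjC1[OF hq] adjC2[OF hq] adjC3[OF hq] adjC4[OF hq] adjC5[OF hq] adjC6[OF hq]
    adjC7[OF hq] adjC8[OF hq] adjC9[OF hq] adjC10[OF hq] adjC11[OF hq] adjC12[OF hq]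

abbreviation "S i \<equiv> (\<Sum>j<nn. (if tree_adj r1 r2 h q1 q2 i j then 1 else 0) * x j)"
abbreviation "RHS i \<equiv> lam t * x i - (if i = 0 then Ft r1 r2 h q1 q2 t else 0)"

end

context trl begin
lemma vc1: assumes c: "i = 0" shows "S i = RHS i"
proof -
  have nb: "tree_adj r1 r2 h q1 q2 i j \<longleftrightarrow> j \<in> {1, h+1, h+q1+1}" for j
    using adjC0[OF hq, where ra=r1 and rb=r2 and j=j] c by auto
  have sub: "{1, h+1, h+q1+1} \<subseteq> {..<nn}" using hq unfolding nn_eq by auto
  have "S i = sum x {1, h+1, h+q1+1}"
    by (rule sum_nb[where P="tree_adj r1 r2 h q1 q2 i", OF _ sub nb]) simp
  also have "\<dots> = x 1 + x (h+1) + x (h+q1+1)" using hq by simp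
  also have "x 1 = Pv t (h-1) * B1 * B2" using hq by (simp add: vx_def)
  also have "x (h+1) = Qv r1 t (q1-1) * A * B2" using hq by (simp add: vx_def)
  also have "x (h+q1+1) = Qv r2 t (q2-1) * A * B1" using hq by (simp add: vx_def)
  also have "Pv t (h-1) * B1 * B2 + Qv r1 t (q1-1) * A * B2 + Qv r2 t (q2-1) * A * B1 = lam t * (A * B1 * B2) - Ft r1 r2 h q1 q2 t"
    unfolding Ft_def by (simp add: algebra_simps)
  also have "A * B1 * B2 = x 0" by (simp add: vx_def)
  finally show ?thesis using c by simp
qed

lemma vc2: assumes c: "1 \<le> i \<and> i < h" shows "S i = RHS i"
proof -
  have nb: "tree_adj r1 r2 h q1 q2 i j \<longleftrightarrow> j \<in> {i-1, i+1}" for j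
    using adjC1[OF hq, where ra=r1 and rb=r2 and i=i and j=j] c by auto
  have sub: "{i-1, i+1} \<subseteq> {..<nn}" using hq c unfolding nn_eq by auto
  have "S i = sum x {i-1, i+1}"
    by (rule sum_nb[where P="tree_adj r1 r2 h q1 q2 i", OF _ sub nb]) simp
  also have "\<dots> = x (i-1) + x (i+1)" using c by simp
  finally have s: "S i = x (i-1) + x (i+1)" .
  obtain k where k: "h - i = Suc k" using c by (metis Suc_diff_Suc)
  have e1: "h - (i-1) = Suc (Suc k)" "h - (i+1) = k" using k c by auto
  have f: "i - 1 \<le> h" "i + 1 \<le> h" using c by auto
  have v1: "x (i-1) = Pv t (Suc (Suc k)) * B1 * B2" using f e1 by (simp add: vx_def)
  have v2: "x (i+1) = Pv t k * B1 * B2" using f e1 by (simp add: vx_def)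
  have v3: "x i = Pv t (Suc k) * B1 * B2" using c k by (simp add: vx_def)
  have "x (i-1) + x (i+1) = (Pv t (Suc (Suc k)) + Pv t k) * B1 * B2" unfolding v1 v2 by (simp add: algebra_simps)
  also have "\<dots> = lam t * x i" unfolding v3 Pv_rec[OF t0] by simp
  finally show ?thesis using s c by simp
qed

lemma vc3: assumes c: "i = h" shows "S i = RHS i"
proof -
  have nb: "tree_adj r1 r2 h q1 q2 i j \<longleftrightarrow> j \<in> {h-1}" for j
    using adjC2[OF hq, where ra=r1 and rb=r2 and j=j] c by auto
  have sub: "{h-1} \<subseteq> {..<nn}" using hq c unfolding nn_eq by auto
  have "S i = sum x {h-1}"
    by (rule sum_nb[where P="tree_adj r1 r2 h q1 q2 i", OF _ sub nb]) simp
  also have "\<dots> = x (h-1)" by simp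
  also have "x (h-1) = Pv t 1 * B1 * B2" using hq by (simp add: vx_def)
  also have "\<dots> = lam t * (Pv t 0 * B1 * B2)" unfolding Pv1[OF t0] Pv0[OF t0] by simp
  also have "Pv t 0 * B1 * B2 = x i" using c by (simp add: vx_def)
  finally show ?thesis using c hq by simp
qed

lemma vc4: assumes c: "i = h+1" shows "S i = RHS i"
proof -
  have nb: "tree_adj r1 r2 h q1 q2 i j \<longleftrightarrow> j \<in> {0, h+2}" for j
    using adjC3[OF hq, where ra=r1 and rb=r2 and j=j] c by auto
  have sub: "{0, h+2} \<subseteq> {..<nn}" using hq c unfolding nn_eq by auto
  have "S i = sum x {0, h+2}"
    by (rule sum_nb[where P="tree_adj r1 r2 h q1 q2 i", OF _ sub nb]) simp
  also have "\<dots> = x 0 + x (h+2)" by simp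
  finally have s: "S i = x 0 + x (h+2)" .
  obtain k where k: "q1 = Suc (Suc k)" using hq by (metis add_2_eq_Suc le_Suc_ex)
  have v1: "x 0 = Qv r1 t (Suc (Suc k)) * A * B2" using k by (simp add: vx_def)
  have v2: "x (h+2) = Qv r1 t k * A * B2" using k by (simp add: vx_def)
  have v3: "x i = Qv r1 t (Suc k) * A * B2" using c k by (simp add: vx_def)
  have "x 0 + x (h+2) = (Qv r1 t (Suc (Suc k)) + Qv r1 t k) * A * B2" unfolding v1 v2 by (simp add: algebra_simps)
  also have "\<dots> = lam t * x i" unfolding v3 Qv_rec[OF t0] by simp
  finally show ?thesis using s c by simp
qed

lemma vc5: assumes c: "h+1 < i \<and> i < h+q1" shows "S i = RHS i"
proof -
  have nb: "tree_adj r1 r2 h q1 q2 i j \<longleftrightarrow> j \<in> {i-1, i+1}" for j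
    using adjC4[OF hq, where ra=r1 and rb=r2 and i=i and j=j] c by auto
  have sub: "{i-1, i+1} \<subseteq> {..<nn}" using hq c unfolding nn_eq by auto
  have "S i = sum x {i-1, i+1}"
    by (rule sum_nb[where P="tree_adj r1 r2 h q1 q2 i", OF _ sub nb]) simp
  also have "\<dots> = x (i-1) + x (i+1)" using c by simp
  finally have s: "S i = x (i-1) + x (i+1)" .
  obtain k where k: "h + q1 - i = Suc k" using c by (metis Suc_diff_Suc)
  have e1: "h + q1 - (i-1) = Suc (Suc k)" "h + q1 - (i+1) = k" using k c by auto
  have f: "\<not> i - 1 \<le> h" "i - 1 \<le> h + q1" "\<not> i + 1 \<le> h" "i + 1 \<le> h + q1" using c by auto
  have v1: "x (i-1) = Qv r1 t (Suc (Suc k)) * A * B2" using f e1 by (simp add: vx_def)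
  have v2: "x (i+1) = Qv r1 t k * A * B2" using f e1 by (simp add: vx_def)
  have v3: "x i = Qv r1 t (Suc k) * A * B2" using c k by (simp add: vx_def)
  have "x (i-1) + x (i+1) = (Qv r1 t (Suc (Suc k)) + Qv r1 t k) * A * B2" unfolding v1 v2 by (simp add: algebra_simps)
  also have "\<dots> = lam t * x i" unfolding v3 Qv_rec[OF t0] by simp
  finally show ?thesis using s c by simp
qed

lemma vc6: assumes c: "i = h+q1" shows "S i = RHS i"
proof -
  let ?I = "(\<lambda>k::nat. (h+q1+q2+1) + 2*k) ` {..<r1}"
  have nb: "tree_adj r1 r2 h q1 q2 i j \<longleftrightarrow> j \<in> insert (h+q1-1) ?I" for j
    using adjC5[OF hq, where ra=r1 and rb=r2 and j=j] img_even[of "h+q1+q2+1" j r1] c by (auto simp: Suc_le_eq)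
  have sub: "insert (h+q1-1) ?I \<subseteq> {..<nn}" using hq c unfolding nn_eq by auto
  have "S i = sum x (insert (h+q1-1) ?I)"
    by (rule sum_nb[where P="tree_adj r1 r2 h q1 q2 i", OF _ sub nb]) simp
  also have "\<dots> = x (h+q1-1) + sum x ?I" using hq by (subst sum.insert) auto
  also have "sum x ?I = (\<Sum>k<r1. x (h+q1+q2+1 + 2*k))" by (rule sum_img_const)
  also have "\<dots> = (\<Sum>k<r1. lam t * cc t * A * B2)"
    by (intro sum.cong) (auto simp: vx_def pev_def)
  also have "x (h+q1-1) = Qv r1 t 1 * A * B2"
  proof -
    have f: "\<not> h + q1 - 1 \<le> h" "h + q1 - 1 \<le> h + q1" "h + q1 - (h + q1 - 1) = 1" using hq by auto
    thus ?thesis unfolding vx_def by simp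
  qed
  finally have s: "S i = Qv r1 t 1 * A * B2 + r1 * (lam t * cc t) * A * B2" by (simp add: algebra_simps)
  have v3: "x i = Qv r1 t 0 * A * B2" using c hq by (simp add: vx_def)
  have "Qv r1 t 1 * A * B2 + r1 * (lam t * cc t) * A * B2 = (Qv r1 t 1 + r1 * (lam t * cc t)) * A * B2"
    by (simp add: algebra_simps)
  also have "\<dots> = lam t * x i" unfolding v3 Qv1[OF t0] by simp
  finally show ?thesis using s c hq by simp
qed

lemma vc7: assumes c: "i = h+q1+1" shows "S i = RHS i"
proof -
  have nb: "tree_adj r1 r2 h q1 q2 i j \<longleftrightarrow> j \<in> {0, h+q1+2}" for j
    using adjC6[OF hq, where ra=r1 and rb=r2 and j=j] c by auto
  have sub: "{0, h+q1+2} \<subseteq> {..<nn}" using hq c unfolding nn_eq by auto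
  have "S i = sum x {0, h+q1+2}"
    by (rule sum_nb[where P="tree_adj r1 r2 h q1 q2 i", OF _ sub nb]) simp
  also have "\<dots> = x 0 + x (h+q1+2)" by simp
  finally have s: "S i = x 0 + x (h+q1+2)" .
  obtain k where k: "q2 = Suc (Suc k)" using hq by (metis add_2_eq_Suc le_Suc_ex)
  have v1: "x 0 = Qv r2 t (Suc (Suc k)) * A * B1" using k by (simp add: vx_def)
  have v2: "x (h+q1+2) = Qv r2 t k * A * B1" using k hq by (simp add: vx_def)
  have v3: "x i = Qv r2 t (Suc k) * A * B1" using c k hq by (simp add: vx_def)
  have "x 0 + x (h+q1+2) = (Qv r2 t (Suc (Suc k)) + Qv r2 t k) * A * B1" unfolding v1 v2 by (simp add: algebra_simps)
  also have "\<dots> = lam t * x i" unfolding v3 Qv_rec[OF t0] by simp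
  finally show ?thesis using s c by simp
qed

lemma vc8: assumes c: "h+q1+1 < i \<and> i < h+q1+q2" shows "S i = RHS i"
proof -
  have nb: "tree_adj r1 r2 h q1 q2 i j \<longleftrightarrow> j \<in> {i-1, i+1}" for j
    using adjC7[OF hq, where ra=r1 and rb=r2 and i=i and j=j] c by auto
  have sub: "{i-1, i+1} \<subseteq> {..<nn}" using hq c unfolding nn_eq by auto
  have "S i = sum x {i-1, i+1}"
    by (rule sum_nb[where P="tree_adj r1 r2 h q1 q2 i", OF _ sub nb]) simp
  also have "\<dots> = x (i-1) + x (i+1)" using c by simp
  finally have s: "S i = x (i-1) + x (i+1)" .
  obtain k where k: "h + q1 + q2 - i = Suc k" using c by (metis Suc_diff_Suc)
  have e1: "h + q1 + q2 - (i-1) = Suc (Suc k)" "h + q1 + q2 - (i+1) = k" using k c by auto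
  have f: "\<not> i - 1 \<le> h" "\<not> i - 1 \<le> h + q1" "i - 1 \<le> h + q1 + q2" "\<not> i + 1 \<le> h" "\<not> i + 1 \<le> h + q1" "i + 1 \<le> h + q1 + q2" using c by auto
  have v1: "x (i-1) = Qv r2 t (Suc (Suc k)) * A * B1" using f e1 by (simp add: vx_def)
  have v2: "x (i+1) = Qv r2 t k * A * B1" using f e1 by (simp add: vx_def)
  have v3: "x i = Qv r2 t (Suc k) * A * B1" using c k by (simp add: vx_def)
  have "x (i-1) + x (i+1) = (Qv r2 t (Suc (Suc k)) + Qv r2 t k) * A * B1" unfolding v1 v2 by (simp add: algebra_simps)
  also have "\<dots> = lam t * x i" unfolding v3 Qv_rec[OF t0] by simp
  finally show ?thesis using s c by simp
qed

lemma vc9: assumes c: "i = h+q1+q2" shows "S i = RHS i"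
proof -
  let ?I = "(\<lambda>k::nat. (h+q1+q2+1+2*r1) + 2*k) ` {..<r2}"
  have nb: "tree_adj r1 r2 h q1 q2 i j \<longleftrightarrow> j \<in> insert (h+q1+q2-1) ?I" for j
    using adjC8[OF hq, where ra=r1 and rb=r2 and j=j] img_even[of "h+q1+q2+1+2*r1" j r2] c by (auto simp: Suc_le_eq)
  have sub: "insert (h+q1+q2-1) ?I \<subseteq> {..<nn}" using hq c unfolding nn_eq by auto
  have "S i = sum x (insert (h+q1+q2-1) ?I)"
    by (rule sum_nb[where P="tree_adj r1 r2 h q1 q2 i", OF _ sub nb]) simp
  also have "\<dots> = x (h+q1+q2-1) + sum x ?I" using hq by (subst sum.insert) auto
  also have "sum x ?I = (\<Sum>k<r2. x (h+q1+q2+1+2*r1 + 2*k))" by (rule sum_img_const)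
  also have "\<dots> = (\<Sum>k<r2. lam t * cc t * A * B1)"
    by (intro sum.cong) (auto simp: vx_def pev_def)
  also have "x (h+q1+q2-1) = Qv r2 t 1 * A * B1"
  proof -
    have f: "\<not> h + q1 + q2 - 1 \<le> h" "\<not> h + q1 + q2 - 1 \<le> h + q1" "h + q1 + q2 - 1 \<le> h + q1 + q2" "h + q1 + q2 - (h + q1 + q2 - 1) = 1" using hq by auto
    thus ?thesis unfolding vx_def by simp
  qed
  finally have s: "S i = Qv r2 t 1 * A * B1 + r2 * (lam t * cc t) * A * B1" by (simp add: algebra_simps)
  have v3: "x i = Qv r2 t 0 * A * B1" using c hq by (simp add: vx_def)
  have "Qv r2 t 1 * A * B1 + r2 * (lam t * cc t) * A * B1 = (Qv r2 t 1 + r2 * (lam t * cc t)) * A * B1"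
    by (simp add: algebra_simps)
  also have "\<dots> = lam t * x i" unfolding v3 Qv1[OF t0] by simp
  finally show ?thesis using s c hq by simp
qed

lemma vc10: assumes c: "h+q1+q2 < i \<and> i < h+q1+q2+1+2*r1 \<and> pev i (h+q1+q2+1)" shows "S i = RHS i"
proof -
  have i1: "i + 1 < h+q1+q2+1+2*r1" "\<not> pev (i + 1) (h+q1+q2+1)" using c unfolding pev_def by presburger+
  have nb: "tree_adj r1 r2 h q1 q2 i j \<longleftrightarrow> j \<in> {h+q1, i+1}" for j
    using adjC9[OF hq, where ra=r1 and rb=r2 and i=i and j=j] c by auto
  have sub: "{h+q1, i+1} \<subseteq> {..<nn}" using hq c i1 unfolding nn_eq by auto
  have "S i = sum x {h+q1, i+1}"
    by (rule sum_nb[where P="tree_adj r1 r2 h q1 q2 i", OF _ sub nb]) simp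
  also have "\<dots> = x (h+q1) + x (i+1)" using c by simp
  also have "x (h+q1) = Qv r1 t 0 * A * B2" using hq by (simp add: vx_def)
  also have "x (i+1) = cc t * A * B2" using c i1 by (simp add: vx_def)
  also have "Qv r1 t 0 * A * B2 + cc t * A * B2 = lam t * (lam t * cc t * A * B2)"
    unfolding Qv0[OF t0] by (simp add: algebra_simps power2_eq_square)
  also have "lam t * cc t * A * B2 = x i" using c by (simp add: vx_def)
  finally show ?thesis using c by simp
qed

lemma vc11: assumes c: "h+q1+q2 < i \<and> i < h+q1+q2+1+2*r1 \<and> \<not> pev i (h+q1+q2+1)" shows "S i = RHS i"
proof -
  have i1: "h+q1+q2 < i - 1" "pev (i - 1) (h+q1+q2+1)" using c unfolding pev_def by presburger+
  have nb: "tree_adj r1 r2 h q1 q2 i j \<longleftrightarrow> j \<in> {i-1}" for j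
    using adjC10[OF hq, where ra=r1 and rb=r2 and i=i and j=j] c by auto
  have sub: "{i-1} \<subseteq> {..<nn}" using hq c unfolding nn_eq by auto
  have "S i = sum x {i-1}"
    by (rule sum_nb[where P="tree_adj r1 r2 h q1 q2 i", OF _ sub nb]) simp
  also have "\<dots> = x (i-1)" by simp
  also have "x (i-1) = lam t * cc t * A * B2"
  proof -
    have f: "\<not> i - 1 \<le> h" "\<not> i - 1 \<le> h + q1" "\<not> i - 1 \<le> h + q1 + q2" "i - 1 < h+q1+q2+1+2*r1" using c i1 by auto
    thus ?thesis using i1 unfolding vx_def by simp
  qed
  also have "\<dots> = lam t * (cc t * A * B2)" by simp
  also have "cc t * A * B2 = x i" using c by (simp add: vx_def)
  finally show ?thesis using c by simp
qed

lemma vc12: assumes c: "h+q1+q2+2*r1 < i \<and> i < h+q1+q2+1+2*(r1+r2) \<and> pev i (h+q1+q2+1+2*r1)" shows "S i = RHS i"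
proof -
  have i1: "i + 1 < h+q1+q2+1+2*(r1+r2)" "\<not> pev (i + 1) (h+q1+q2+1+2*r1)" using c unfolding pev_def by presburger+
  have nb: "tree_adj r1 r2 h q1 q2 i j \<longleftrightarrow> j \<in> {h+q1+q2, i+1}" for j
    using adjC11[OF hq, where ra=r1 and rb=r2 and i=i and j=j] c by auto
  have sub: "{h+q1+q2, i+1} \<subseteq> {..<nn}" using hq c i1 unfolding nn_eq by auto
  have "S i = sum x {h+q1+q2, i+1}"
    by (rule sum_nb[where P="tree_adj r1 r2 h q1 q2 i", OF _ sub nb]) simp
  also have "\<dots> = x (h+q1+q2) + x (i+1)" using c by simp
  also have "x (h+q1+q2) = Qv r2 t 0 * A * B1" using hq by (simp add: vx_def)
  also have "x (i+1) = cc t * A * B1" using c i1 by (simp add: vx_def)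
  also have "Qv r2 t 0 * A * B1 + cc t * A * B1 = lam t * (lam t * cc t * A * B1)"
    unfolding Qv0[OF t0] by (simp add: algebra_simps power2_eq_square)
  also have "lam t * cc t * A * B1 = x i" using c by (simp add: vx_def)
  finally show ?thesis using c by simp
qed

lemma vc13: assumes c: "h+q1+q2+2*r1 < i \<and> i < h+q1+q2+1+2*(r1+r2) \<and> \<not> pev i (h+q1+q2+1+2*r1)" shows "S i = RHS i"
proof -
  have i1: "h+q1+q2+2*r1 < i - 1" "pev (i - 1) (h+q1+q2+1+2*r1)" using c unfolding pev_def by presburger+
  have nb: "tree_adj r1 r2 h q1 q2 i j \<longleftrightarrow> j \<in> {i-1}" for j
    using adjC12[OF hq, where ra=r1 and rb=r2 and i=i and j=j] c by auto
  have sub: "{i-1} \<subseteq> {..<nn}" using hq c unfolding nn_eq by auto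
  have "S i = sum x {i-1}"
    by (rule sum_nb[where P="tree_adj r1 r2 h q1 q2 i", OF _ sub nb]) simp
  also have "\<dots> = x (i-1)" by simp
  also have "x (i-1) = lam t * cc t * A * B1" using c i1 by (simp add: vx_def)
  also have "\<dots> = lam t * (cc t * A * B1)" by simp
  also have "cc t * A * B1 = x i" using c by (simp add: vx_def)
  finally show ?thesis using c by simp
qed

lemma vertex_eq: assumes i: "i < nn" shows "S i = RHS i"
proof -
  have i': "i < h+q1+q2+1+2*(r1+r2)" using i nn_eq by simp
  show ?thesis
  proof (cases "i = 0")
    case True thus ?thesis by (rule vc1)
  next
    case F0: False
    show ?thesis
    proof (cases "i < h")
      case True thus ?thesis using F0 by (intro vc2) simp
    next
      case F1: False
      show ?thesis
      proof (cases "i = h")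
        case True thus ?thesis by (rule vc3)
      next
        case F2: False
        show ?thesis
        proof (cases "i = h+1")
          case True thus ?thesis by (rule vc4)
        next
          case F3: False
          show ?thesis
          proof (cases "i < h+q1")
            case True thus ?thesis using F1 F2 F3 by (intro vc5) simp
          next
            case F4: False
            show ?thesis
            proof (cases "i = h+q1")
              case True thus ?thesis by (rule vc6)
            next
              case F5: False
              show ?thesis
              proof (cases "i = h+q1+1")
                case True thus ?thesis by (rule vc7)
              next
                case F6: False
                show ?thesis
                proof (cases "i < h+q1+q2")
                  case True thus ?thesis using F4 F5 F6 by (intro vc8) simp
                next
                  case F7: False
                  show ?thesis
                  proof (cases "i = h+q1+q2")
                    case True thus ?thesis by (rule vc9)
                  next
                    case F8: False
                    have gt: "h+q1+q2 < i" using F7 F8 by simp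
                    show ?thesis
                    proof (cases "i < h+q1+q2+1+2*r1")
                      case True
                      show ?thesis
                      proof (cases "pev i (h+q1+q2+1)")
                        case True thus ?thesis using gt \<open>i < h+q1+q2+1+2*r1\<close> by (intro vc10) simp
                      next
                        case False thus ?thesis using gt \<open>i < h+q1+q2+1+2*r1\<close> by (intro vc11) simp
                      qed
                    next
                      case F9: False
                      have gt2: "h+q1+q2+2*r1 < i" using F9 by simp
                      show ?thesis
                      proof (cases "pev i (h+q1+q2+1+2*r1)")
                        case True thus ?thesis using gt2 i' by (intro vc12) simp
                      next
                        case False thus ?thesis using gt2 i' by (intro vc13) simp
                      qed
                    qed
                  qed
                qed
              qed
            qed
          qed
        qed
      qed
    qed
  qed
qed

end

lemma lam_pos: assumes "t > 0" shows "lam t > 0"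
proof -
  have "1/t > 0" using assms by simp
  thus ?thesis unfolding lam_def using assms by linarith
qed
lemma cc_pos: assumes "t > 1" shows "cc t > 0"
proof -
  have "1/t < 1" using assms by simp
  thus ?thesis unfolding cc_def using assms by linarith
qed

lemma Gs_pos: assumes "a \<ge> 0" "b > 0" "t > 0" shows "Gs a b t k > 0"
  unfolding Gs_def using assms by (simp add: add_nonneg_pos)

lemma Pv_pos: assumes "t > 1" shows "Pv t k > 0"
proof -
  have "t * t^k = t ^ Suc k" by simp
  also have "\<dots> > 1" using assms by (intro one_less_power) auto
  finally have a: "t * t^k > 1" .
  have "(1/t) * (1/t)^k = (1/t) ^ Suc k" by simp
  also have "\<dots> < 1" using assms by (intro power_Suc_less_one) auto
  finally have b: "(1/t) * (1/t)^k < 1" .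
  show ?thesis unfolding Pv_def Gs_def using a b by simp
qed

lemma al_form_raw: fixes t :: real assumes "t > 0" 
  shows "t * ((t + 1/t)^2 - 1) - r * (t + 1/t) = (t + 1/t) * (t^2 + 1/(t^2+1) - r)"
proof -
  have tp: "t^2 + 1 > 0" by (smt (verit) zero_le_power2)
  have e1: "(t + 1/t) * (1/(t^2+1)) = 1/t" using assms tp by (simp add: field_simps power2_eq_square)
  have e2: "t * ((t + 1/t)^2 - 1) = (t + 1/t) * t^2 + 1/t" using assms by (simp add: field_simps power2_eq_square)
  have "(t + 1/t) * (t^2 + 1/(t^2+1) - r) = (t + 1/t) * t^2 + (t + 1/t) * (1/(t^2+1)) - r * (t + 1/t)"
    by (simp add: algebra_simps)
  thus ?thesis using e1 e2 by simp
qed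

lemma al_form: assumes "t > 0" shows "al r t = lam t * (t^2 + 1/(t^2+1) - r)"
  unfolding al_def lam_def using al_form_raw[OF assms, of "real r"] by simp

lemma be_pos: assumes "t > 1" "(r::nat) \<ge> 2" shows "be r t > 0"
proof -
  have t0: "t > 0" using assms by simp
  have id: "(t + 1/t)^2 - 1 - 2*(t+1/t)*t = 1/t^2 - t^2 - 1" using t0 by (simp add: field_simps power2_eq_square)
  have "1/t^2 < 1" using assms by simp
  moreover have "t^2 > 0" using t0 by simp
  ultimately have "(t + 1/t)^2 - 1 < 2*(t+1/t)*t" using id by linarith
  hence "((lam t)^2 - 1) / t < 2 * lam t" unfolding lam_def using t0 by (simp add: divide_less_eq)
  moreover have "2 * lam t \<le> r * lam t" using assms(2) lam_pos[OF t0] by (intro mult_right_mono) auto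
  ultimately show ?thesis unfolding be_def by linarith
qed

lemma sq_mono: fixes s t :: real assumes "1 \<le> s" "s \<le> t" shows "s^2 + 1/(s^2+1) \<le> t^2 + 1/(t^2+1)"
proof -
  have s2: "s^2 \<le> t^2" using assms by (smt (verit) mult_mono power2_eq_square)
  have p: "(s^2+1)*(t^2+1) \<ge> 1"
  proof -
    have "s^2 \<ge> 0" "t^2 \<ge> 0" by auto
    hence "s^2 + 1 \<ge> 1" "t^2+1 \<ge> 1" by auto
    thus ?thesis by (metis mult_mono one_le_mult_iff order_trans zero_le_one mult_1_right) 
  qed
  have sp: "s^2+1 > 0" "t^2+1 > 0" by (smt (verit) zero_le_power2)+
  have "1/(s^2+1) - 1/(t^2+1) = (t^2 - s^2) / ((s^2+1)*(t^2+1))"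
    using sp by (simp add: field_simps)
  also have "\<dots> \<le> t^2 - s^2" using p s2 by (simp add: divide_le_eq mult_le_cancel_left1)
  finally show ?thesis by simp
qed

lemma al_mono: assumes "1 \<le> s" "s \<le> t" "al r s \<ge> 0" shows "al r t \<ge> 0"
proof -
  have "lam s > 0" "lam t > 0" using assms lam_pos by auto
  hence "s^2 + 1/(s^2+1) - r \<ge> 0" using assms(3) al_form[of s r] assms(1)
    by (simp add: zero_le_mult_iff)
  hence "t^2 + 1/(t^2+1) - r \<ge> 0" using sq_mono[OF assms(1,2)] by simp
  thus ?thesis using al_form[of t r] assms \<open>lam t > 0\<close> by simp
qed

lemma al_anti: assumes "t > 0" "r1 \<le> r2" shows "al r2 t \<le> al r1 t"
  using assms lam_pos[OF assms(1)] unfolding al_def by (simp add: mult_right_mono)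

lemma al_anti_strict: assumes "t > 0" "r1 < r2" shows "al r2 t < al r1 t"
  using assms lam_pos[OF assms(1)] unfolding al_def by (simp add: mult_strict_right_mono)

lemma Gs_shift: assumes "t \<noteq> 0" shows "t * Gs a b t k - Gs a b t (Suc k) = b * (1/t)^k * (t - 1/t)"
  unfolding Gs_def using assms by (simp add: field_simps)

lemma Qv_pos: assumes "t > 1" "al r t \<ge> 0" "r \<ge> 2" shows "Qv r t k > 0"
  unfolding Qv_def using Gs_pos[OF assms(2) be_pos[OF assms(1,3)]] assms(1) by simp


lemma comp_alg:
  fixes l p0 p1 p2 a b c v w :: real
  assumes pos: "p1 > 0" "p2 > 0" "b > 0" "c > 0" "w > 0"
    and F': "l*p1*c*w - p0*c*w - b*p1*w - v*p1*c = 0"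
    and cp: "p0*p2 < p1^2" and cq: "b^2 \<le> a*c"
  shows "l*p2*b*w - p1*b*w - a*p2*w - v*p2*b < 0"
proof -
  define G where "G = l*p2*b*w - p1*b*w - a*p2*w - v*p2*b"
  define D where "D = p1*c*w"
  have Dp: "D > 0" unfolding D_def using pos by simp
  have lD: "l*D = p0*c*w + b*p1*w + v*p1*c" unfolding D_def using F' by (simp add: algebra_simps)
  have "G*D = p2*b*w*(l*D) - D*(p1*b*w + a*p2*w + v*p2*b)" unfolding G_def by (simp add: algebra_simps)
  also have "\<dots> = p2*b*w*(p0*c*w + b*p1*w + v*p1*c) - p1*c*w*(p1*b*w + a*p2*w + v*p2*b)"
    using lD unfolding D_def by simp
  also have "\<dots> = b*c*w^2*(p0*p2 - p1^2) + p1*p2*w^2*(b^2 - a*c)"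
    by (simp add: algebra_simps power2_eq_square)
  finally have GD: "G*D = b*c*w^2*(p0*p2 - p1^2) + p1*p2*w^2*(b^2 - a*c)" .
  have n1: "b*c*w^2*(p0*p2 - p1^2) < 0" using pos cp by (simp add: mult_pos_neg)
  have n2: "p1*p2*w^2*(b^2 - a*c) \<le> 0" using pos cq by (simp add: mult_nonneg_nonpos)
  have "G*D < 0" using GD n1 n2 by linarith
  hence "G < 0" using Dp by (simp add: mult_less_0_iff)
  thus ?thesis unfolding G_def .
qed

lemma Gs_cross': assumes "t \<noteq> 0" shows "Gs a b t k * Gs a b t (Suc (Suc k)) = (Gs a b t (Suc k))^2 + a * b * (cc t)^2"
  using Gs_cross[OF assms, of a b k] by simp

lemma Pv_cross: assumes "t > 1" shows "Pv t k * Pv t (Suc (Suc k)) < (Pv t (Suc k))^2"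
proof -
  have "t * (-1/t) * (cc t)^2 < 0" using assms cc_pos[OF assms] by simp
  thus ?thesis unfolding Pv_def using Gs_cross'[of t t "-1/t" k] assms by simp
qed

lemma Qv_cross: assumes "t > 1" "al r t \<ge> 0" "r \<ge> 2" shows "(Qv r t (Suc k))^2 \<le> Qv r t k * Qv r t (Suc (Suc k))"
proof -
  have "al r t * be r t * (cc t)^2 \<ge> 0" using assms be_pos[OF assms(1,3)] by simp
  thus ?thesis unfolding Qv_def using Gs_cross'[of t "al r t" "be r t" k] assms by simp
qed

lemma Fcomp:
  assumes t: "t > 1" and r: "2 \<le> r1" "r1 < r2" and al2: "al r2 t \<ge> 0"
    and hq: "3 \<le> h" "2 \<le> q1" "2 \<le> q2"
    and cases: "(h' = h - 1 \<and> q1' = q1 + 1 \<and> q2' = q2) \<or> (h' = h - 1 \<and> q1' = q1 \<and> q2' = q2 + 1)"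
    and F0: "Ft r1 r2 h' q1' q2' t = 0"
  shows "Ft r1 r2 h q1 q2 t < 0"
proof -
  have t0: "t > 0" using t by simp
  have al1: "al r1 t \<ge> 0" using al_anti[OF t0, of r1 r2] r al2 by simp
  have r2g: "2 \<le> r2" using r by simp
  define g where "g = h - 2"
  have g: "h = Suc (Suc g)" unfolding g_def using hq by simp
  have hm: "h - 1 = Suc g" "h - 1 - 1 = g" "h - Suc (Suc 0) = g" using g by auto
  have cp: "Pv t g * Pv t h < (Pv t (Suc g))^2" using Pv_cross[OF t, of g] g by simp
  have pp: "\<And>k. Pv t k > 0" using Pv_pos[OF t] by simp
  have q1p: "\<And>k. Qv r1 t k > 0" using Qv_pos[OF t al1] r by simp
  have q2p: "\<And>k. Qv r2 t k > 0" using Qv_pos[OF t al2] r by simp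
  from cases show ?thesis
  proof
    assume c: "h' = h - 1 \<and> q1' = q1 + 1 \<and> q2' = q2"
    obtain p where p: "q1 = Suc p" using hq by (cases q1) auto
    have cq: "(Qv r1 t q1)^2 \<le> Qv r1 t (q1-1) * Qv r1 t (q1+1)" using Qv_cross[OF t al1 r(1), of p] p by simp
    have F': "lam t * Pv t (Suc g) * Qv r1 t (q1+1) * Qv r2 t q2 - Pv t g * Qv r1 t (q1+1) * Qv r2 t q2
       - Qv r1 t q1 * Pv t (Suc g) * Qv r2 t q2 - Qv r2 t (q2-1) * Pv t (Suc g) * Qv r1 t (q1+1) = 0"
      using F0 c hm unfolding Ft_def by simp
    have "lam t * Pv t h * Qv r1 t q1 * Qv r2 t q2 - Pv t (Suc g) * Qv r1 t q1 * Qv r2 t q2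
       - Qv r1 t (q1-1) * Pv t h * Qv r2 t q2 - Qv r2 t (q2-1) * Pv t h * Qv r1 t q1 < 0"
      using comp_alg[of "Pv t (Suc g)" "Pv t h" "Qv r1 t q1" "Qv r1 t (q1+1)" "Qv r2 t q2" "lam t" "Pv t g"
          "Qv r2 t (q2-1)" "Qv r1 t (q1-1)"] pp q1p q2p F' cp cq
      by (simp add: algebra_simps)
    thus ?thesis unfolding Ft_def using hm by simp
  next
    assume c: "h' = h - 1 \<and> q1' = q1 \<and> q2' = q2 + 1"
    obtain p where p: "q2 = Suc p" using hq by (cases q2) auto
    have cq: "(Qv r2 t q2)^2 \<le> Qv r2 t (q2-1) * Qv r2 t (q2+1)" using Qv_cross[OF t al2 r2g, of p] p by simp
    have F': "lam t * Pv t (Suc g) * Qv r1 t q1 * Qv r2 t (q2+1) - Pv t g * Qv r1 t q1 * Qv r2 t (q2+1)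
       - Qv r1 t (q1-1) * Pv t (Suc g) * Qv r2 t (q2+1) - Qv r2 t q2 * Pv t (Suc g) * Qv r1 t q1 = 0"
      using F0 c hm unfolding Ft_def by simp
    have "lam t * Pv t h * Qv r1 t q1 * Qv r2 t q2 - Pv t (Suc g) * Qv r1 t q1 * Qv r2 t q2
       - Qv r1 t (q1-1) * Pv t h * Qv r2 t q2 - Qv r2 t (q2-1) * Pv t h * Qv r1 t q1 < 0"
      using comp_alg[of "Pv t (Suc g)" "Pv t h" "Qv r2 t q2" "Qv r2 t (q2+1)" "Qv r1 t q1" "lam t" "Pv t g"
          "Qv r1 t (q1-1)" "Qv r2 t (q2-1)"] pp q1p q2p F' cp cq
      by (simp add: algebra_simps)
    thus ?thesis unfolding Ft_def using hm by simp
  qed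
qed


lemma Fneg:
  assumes t: "t > 1" and r: "2 \<le> r1" "r1 < r2" and al2: "al r2 t = 0"
    and hq: "2 \<le> h" "2 \<le> q1" "2 \<le> q2"
  shows "Ft r1 r2 h q1 q2 t < 0"
proof -
  have t0: "t > 0" using t by simp
  have al1: "al r1 t \<ge> 0" using al_anti_strict[OF t0, of r1 r2] r al2 by simp
  obtain m where m: "q2 = Suc m" using hq by (cases q2) auto
  obtain p where p: "q1 = Suc p" using hq by (cases q1) auto
  have Q2rel: "Qv r2 t m = t * Qv r2 t q2"
    unfolding Qv_def Gs_def m al2 using t0 by (simp add: field_simps)
  have sh: "t * Qv r1 t p - Qv r1 t q1 = be r1 t * (1/t)^p * (t - 1/t)"
    unfolding Qv_def p by (rule Gs_shift) (use t0 in simp)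
  have "be r1 t * (1/t)^p * (t - 1/t) > 0" using be_pos[OF t r(1)] t cc_pos[OF t] unfolding cc_def by simp
  hence gt: "Qv r1 t q1 < t * Qv r1 t p" using sh by linarith
  hence "Qv r1 t q1 / t < Qv r1 t p" using t0 by (simp add: divide_less_eq mult.commute)
  hence lt: "(1/t) * Qv r1 t q1 - Qv r1 t p < 0" by simp
  have A: "Pv t h > 0" "Pv t (h-1) > 0" using Pv_pos[OF t] by auto
  have B: "Qv r1 t q1 > 0" "Qv r2 t q2 > 0" using Qv_pos[OF t al1 r(1)] Qv_pos[OF t, of r2] al2 r by auto
  have lt': "lam t - t = 1/t" unfolding lam_def by simp
  have e: "Ft r1 r2 h q1 q2 t = Pv t h * Qv r2 t q2 * ((1/t) * Qv r1 t q1 - Qv r1 t p) - Pv t (h-1) * Qv r1 t q1 * Qv r2 t q2"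
    unfolding Ft_def using Q2rel m p lt' by (simp add: algebra_simps)
  have "Pv t h * Qv r2 t q2 * ((1/t) * Qv r1 t q1 - Qv r1 t p) < 0" using A B lt by (simp add: mult_pos_neg)
  moreover have "Pv t (h-1) * Qv r1 t q1 * Qv r2 t q2 > 0" using A B by simp
  ultimately show ?thesis unfolding e by linarith
qed

lemma Q_half:
  assumes t: "t \<ge> 2" and ab: "a \<ge> 0" "b > 0" "b \<le> a*(t^2-2)"
  shows "2 * Gs a b t k \<le> t * Gs a b t (Suc k)"
proof -
  have t0: "t > 0" using t by simp
  have e: "t * Gs a b t (Suc k) - 2 * Gs a b t k = a*t^k*(t^2-2) - b*(1/t)^k"
    unfolding Gs_def using t0 by (simp add: field_simps power2_eq_square)
  have tk: "t^k \<ge> 1" using t by (intro one_le_power) simp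
  have uk: "(1/t)^k \<le> 1" using t by (intro power_le_one) auto
  have "a*(t^2-2) \<ge> 0" using ab by linarith
  hence X1: "a*(t^2-2)*1 \<le> a*(t^2-2)*t^k" using tk by (intro mult_left_mono) auto
  have X2: "b*(1/t)^k \<le> b*1" using uk ab by (intro mult_left_mono) auto
  have eq: "a*t^k*(t^2-2) = a*(t^2-2)*t^k" by simp
  have "a*t^k*(t^2-2) - b*(1/t)^k \<ge> 0" using X1 X2 ab(3) unfolding eq by simp
  thus ?thesis using e by simp
qed

lemma ab_cond:
  assumes r: "2 \<le> r" "r \<le> r2" and t: "t = real r2 + 1"
  shows "be r t \<le> al r t * (t^2 - 2)" "al r t \<ge> 0"
proof -
  have r2: "r2 \<ge> 2" using r by simp
  have t4: "t \<ge> 3" using t r2 by simp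
  have t0: "t > 0" using t4 by simp
  have rt: "real r \<le> t - 1" using r t by simp
  have lp: "lam t > 0" using lam_pos[OF t0] .
  have tt: "t^2 \<ge> 3*t" using t4 by (simp add: power2_eq_square mult_right_mono)
  have pos1: "1/(t^2+1) > 0" by (smt (verit) zero_le_power2 divide_pos_pos)
  have a_ge: "al r t \<ge> lam t * (t^2 - r)" unfolding al_form[OF t0] using lp pos1 by (intro mult_left_mono) auto
  have d: "t^2 - r \<ge> r" using tt rt t4 by linarith
  have d2: "t^2 - 2 \<ge> 1" using tt t4 by linarith
  have "(t^2 - r) * 1 \<le> (t^2 - r) * (t^2 - 2)" using d d2 r by (intro mult_left_mono) auto
  hence "(t^2 - r) \<le> (t^2 - r) * (t^2 - 2)" by simp
  hence d3: "r \<le> (t^2 - r) * (t^2 - 2)" using d by (rule order_trans[rotated])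
  have "(lam t ^2 - 1) / t \<ge> 0"
  proof -
    have "lam t \<ge> 1" unfolding lam_def using t4 by (smt (verit) divide_pos_pos)
    hence "lam t ^ 2 \<ge> 1" by (simp add: one_le_power)
    thus ?thesis using t0 by simp
  qed
  hence "be r t \<le> r * lam t" unfolding be_def by simp
  also have "\<dots> \<le> lam t * ((t^2 - r) * (t^2 - 2))" using d3 lp by (simp add: mult.commute mult_left_mono)
  also have "\<dots> = (lam t * (t^2 - r)) * (t^2 - 2)" by simp
  also have "\<dots> \<le> al r t * (t^2 - 2)" using a_ge d2 by (intro mult_right_mono) auto
  finally show "be r t \<le> al r t * (t^2 - 2)" .
  show "al r t \<ge> 0" using a_ge lp d r by (smt (verit) mult_nonneg_nonneg of_nat_0_le_iff)
qed

lemma Fpos: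
  assumes r: "2 \<le> r1" "r1 < r2" and t: "t = real r2 + 1"
    and hq: "2 \<le> h" "2 \<le> q1" "2 \<le> q2"
  shows "Ft r1 r2 h q1 q2 t > 0"
proof -
  have t3: "t \<ge> 3" using t r by simp
  have t1: "t > 1" and t0: "t > 0" using t3 by auto
  note c1 = ab_cond[of r1 r2 t] and c2 = ab_cond[of r2 r2 t]
  have al1: "al r1 t \<ge> 0" and al2: "al r2 t \<ge> 0" using c1 c2 r t by auto
  obtain m where m: "q2 = Suc m" using hq by (cases q2) auto
  obtain p where p: "q1 = Suc p" using hq by (cases q1) auto
  obtain g where g: "h = Suc g" using hq by (cases h) auto
  have i2: "2 * Qv r1 t p \<le> t * Qv r1 t q1" unfolding Qv_def p
    using Q_half[of t "al r1 t" "be r1 t" p] t3 al1 be_pos[OF t1 r(1)] c1 r t by simp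
  have i3: "2 * Qv r2 t m \<le> t * Qv r2 t q2" unfolding Qv_def m
    using Q_half[of t "al r2 t" "be r2 t" m] t3 al2 be_pos[OF t1, of r2] c2 r t by simp
  have "t * Pv t g - Pv t h = (-1/t) * (1/t)^g * (t - 1/t)" unfolding Pv_def g by (rule Gs_shift) (use t0 in simp)
  moreover have "(-1/t) * (1/t)^g * (t - 1/t) < 0" using t1 cc_pos[OF t1] unfolding cc_def
    by (simp add: mult_neg_pos)
  ultimately have i1: "t * Pv t g < Pv t h" by simp
  have A: "Pv t h > 0" using Pv_pos[OF t1] by auto
  have B: "Qv r1 t q1 > 0" "Qv r2 t q2 > 0" using Qv_pos[OF t1 al1 r(1)] Qv_pos[OF t1 al2] r by auto
  define X where "X = Pv t h * Qv r1 t q1 * Qv r2 t q2"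
  have X: "X > 0" unfolding X_def using A B by simp
  have tl: "t * lam t = t^2 + 1" unfolding lam_def using t0 by (simp add: field_simps power2_eq_square)
  have e: "2 * t * Ft r1 r2 h q1 q2 t = 2 * (t * lam t) * X - 2 * (t * Pv t g) * (Qv r1 t q1 * Qv r2 t q2)
      - t * (2 * Qv r1 t p) * (Pv t h * Qv r2 t q2) - t * (2 * Qv r2 t m) * (Pv t h * Qv r1 t q1)"
    unfolding Ft_def X_def using g p m by (simp add: algebra_simps)
  have j1: "(t * Pv t g) * (Qv r1 t q1 * Qv r2 t q2) < Pv t h * (Qv r1 t q1 * Qv r2 t q2)"
    using i1 B by (intro mult_strict_right_mono) auto
  have j2: "t * (2 * Qv r1 t p) * (Pv t h * Qv r2 t q2) \<le> t * (t * Qv r1 t q1) * (Pv t h * Qv r2 t q2)"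
    using i2 t0 A B by (intro mult_right_mono mult_left_mono) auto
  have j3: "t * (2 * Qv r2 t m) * (Pv t h * Qv r1 t q1) \<le> t * (t * Qv r2 t q2) * (Pv t h * Qv r1 t q1)"
    using i3 t0 A B by (intro mult_right_mono mult_left_mono) auto
  have k: "2 * (t^2 + 1) * X - 2 * (Pv t h * (Qv r1 t q1 * Qv r2 t q2)) - t * (t * Qv r1 t q1) * (Pv t h * Qv r2 t q2)
      - t * (t * Qv r2 t q2) * (Pv t h * Qv r1 t q1) = 0"
    unfolding X_def by (simp add: algebra_simps power2_eq_square)
  have "2 * t * Ft r1 r2 h q1 q2 t > 0" unfolding e tl using j1 j2 j3 k by linarith
  thus ?thesis using t0 by (simp add: zero_less_mult_iff)
qed

lemma lam_strict: assumes "1 \<le> s" "s < t" shows "lam s < lam t"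
proof -
  have s0: "s > 0" and t1: "t > 1" using assms by auto
  have e: "lam t - lam s = (t - s) * (1 - 1/(s*t))" unfolding lam_def using s0 t1 by (simp add: field_simps)
  have "s * t \<ge> 1 * t" using assms t1 by (intro mult_right_mono) auto
  hence "s * t > 1" using t1 by linarith
  hence "1/(s*t) < 1" by simp
  hence "(t - s) * (1 - 1/(s*t)) > 0" using assms by (intro mult_pos_pos) auto
  thus ?thesis using e by simp
qed
lemma Ft_cont: assumes "0 < a" shows "continuous_on {a..b} (\<lambda>t. Ft r1 r2 h q1 q2 t)"
proof -
  have nz: "\<forall>t\<in>{a..b}. t \<noteq> 0" using assms by auto
  show ?thesis unfolding Ft_def Pv_def Qv_def Gs_def al_def be_def lam_def
    by (intro continuous_intros nz)
qed
lemma al_cont: assumes "0 < a" shows "continuous_on {a..b} (\<lambda>t. al r t)"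
proof -
  have nz: "\<forall>t\<in>{a..b}. t \<noteq> 0" using assms by auto
  show ?thesis unfolding al_def lam_def
    by (intro continuous_intros nz)
qed

lemma vx_pos:
  assumes t: "t > 1" and r: "2 \<le> r1" "2 \<le> r2" and al: "al r1 t \<ge> 0" "al r2 t \<ge> 0"
  shows "vx r1 r2 h q1 q2 t i > 0"
proof -
  have t0: "t > 0" using t by simp
  have p: "\<And>k. Pv t k > 0" using Pv_pos[OF t] by simp
  have q1: "\<And>k. Qv r1 t k > 0" using Qv_pos[OF t al(1) r(1)] by simp
  have q2: "\<And>k. Qv r2 t k > 0" using Qv_pos[OF t al(2) r(2)] by simp
  have c: "cc t > 0" "lam t * cc t > 0" using cc_pos[OF t] lam_pos[OF t0] by auto
  show ?thesis unfolding vx_def using p q1 q2 c by simp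
qed

lemma adj_mat_carrier: "tree_adj_mat r1 r2 h q1 q2 \<in> carrier_mat (tree_order r1 r2 h q1 q2) (tree_order r1 r2 h q1 q2)"
  unfolding tree_adj_mat_def by simp

lemma adj_mat_entry: "i < tree_order r1 r2 h q1 q2 \<Longrightarrow> j < tree_order r1 r2 h q1 q2 \<Longrightarrow>
  tree_adj_mat r1 r2 h q1 q2 $$ (i,j) = of_real (if tree_adj r1 r2 h q1 q2 i j then 1 else 0)"
  unfolding tree_adj_mat_def by simp

lemma rho_upper:
  assumes hq: "2 \<le> h" "2 \<le> q1" "2 \<le> q2" and t: "t > 1" and r: "2 \<le> r1" "2 \<le> r2"
    and al: "al r1 t \<ge> 0" "al r2 t \<ge> 0" and F: "Ft r1 r2 h q1 q2 t = 0"
  shows "tree_rho r1 r2 h q1 q2 \<le> lam t"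
proof -
  interpret A: trl r1 r2 h q1 q2 t using hq t by unfold_locales auto
  show ?thesis unfolding tree_rho_def
  proof (rule spec_upper[OF adj_mat_carrier _ adj_mat_entry])
    show "0 < tree_order r1 r2 h q1 q2" unfolding tree_order_def by simp
    show "\<And>i j. 0 \<le> (if tree_adj r1 r2 h q1 q2 i j then 1 else (0::real))" by simp
    show "\<And>i. i < tree_order r1 r2 h q1 q2 \<Longrightarrow> 0 < vx r1 r2 h q1 q2 t i"
      using vx_pos[OF t r al] by simp
    fix i assume "i < tree_order r1 r2 h q1 q2"
    from A.vertex_eq[OF this] F show "(\<Sum>j<tree_order r1 r2 h q1 q2. (if tree_adj r1 r2 h q1 q2 i j then 1 else 0) * vx r1 r2 h q1 q2 t j)
      \<le> lam t * vx r1 r2 h q1 q2 t i" by simp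
  qed
qed

lemma rho_lower:
  assumes hq: "2 \<le> h" "2 \<le> q1" "2 \<le> q2" and t: "t > 1" and r: "2 \<le> r1" "2 \<le> r2"
    and al: "al r1 t \<ge> 0" "al r2 t \<ge> 0" and F: "Ft r1 r2 h q1 q2 t = 0"
  shows "tree_rho r1 r2 h q1 q2 \<ge> lam t"
proof -
  interpret A: trl r1 r2 h q1 q2 t using hq t by unfold_locales auto
  have "tree_rho r1 r2 h q1 q2 \<ge> \<bar>lam t\<bar>" unfolding tree_rho_def
  proof (rule spec_lower[OF adj_mat_carrier adj_mat_entry])
    show "0 < tree_order r1 r2 h q1 q2" unfolding tree_order_def by simp
    show "vx r1 r2 h q1 q2 t 0 \<noteq> 0" using vx_pos[OF t r al] by (metis less_irrefl)
    fix i assume "i < tree_order r1 r2 h q1 q2"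
    from A.vertex_eq[OF this] F show "(\<Sum>j<tree_order r1 r2 h q1 q2. (if tree_adj r1 r2 h q1 q2 i j then 1 else 0) * vx r1 r2 h q1 q2 t j)
      = lam t * vx r1 r2 h q1 q2 t i" by simp
  qed
  thus ?thesis by simp
qed

theorem theorem4p1:
  fixes r1 r2 h q1 q2 h' q1' q2' :: nat
  assumes "2 \<le> r1" and "r1 < r2"
    and "2 \<le> h" and "2 \<le> q1" and "2 \<le> q2"
    and "3 \<le> h"
    and "(h' = h - 1 \<and> q1' = q1 + 1 \<and> q2' = q2) \<or> (h' = h - 1 \<and> q1' = q1 \<and> q2' = q2 + 1)"
  shows "tree_rho r1 r2 h q1 q2 > tree_rho r1 r2 h' q1' q2'"
proof -
  note r = assms(1,2)
  have r2: "2 \<le> r2" using r by simp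
  have hq': "2 \<le> h'" "2 \<le> q1'" "2 \<le> q2'" using assms by auto
  have hq: "2 \<le> h" "2 \<le> q1" "2 \<le> q2" using assms by auto
  define tb where "tb = real r2 + 1"
  have tb3: "tb \<ge> 3" unfolding tb_def using r by simp
  have al1: "al r2 1 < 0" unfolding al_def lam_def using r by simp
  have altb: "al r2 tb \<ge> 0" using ab_cond(2)[of r2 r2 tb] r tb_def by simp
  obtain t0 where t0: "1 \<le> t0" "t0 \<le> tb" "al r2 t0 = 0"
    using IVT'[of "\<lambda>t. al r2 t" 1 0 tb] al1 altb tb3 al_cont[of 1 tb r2] by auto
  have t0g: "t0 > 1" using t0 al1 by (cases "t0 = 1") auto
  have Fa: "Ft r1 r2 h' q1' q2' t0 < 0" using Fneg[OF t0g r t0(3) hq'] .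
  have Fb: "Ft r1 r2 h' q1' q2' tb > 0" using Fpos[OF r tb_def hq'] .
  obtain t1 where t1: "t0 \<le> t1" "t1 \<le> tb" "Ft r1 r2 h' q1' q2' t1 = 0"
    using IVT'[of "\<lambda>t. Ft r1 r2 h' q1' q2' t" t0 0 tb] Fa Fb t0 Ft_cont[of t0 tb] t0g by auto
  have t1g: "t1 > 1" using t1 t0g by simp
  have al2_1: "al r2 t1 \<ge> 0" using al_mono[of t0 t1 r2] t0 t1 by simp
  have al1_1: "al r1 t1 \<ge> 0" using al_anti[of t1 r1 r2] al2_1 r t1g by simp
  have Fc: "Ft r1 r2 h q1 q2 t1 < 0" using Fcomp[OF t1g r al2_1 _ hq(2,3) assms(7) t1(3)] assms(6) by simp
  have Fd: "Ft r1 r2 h q1 q2 tb > 0" using Fpos[OF r tb_def hq] .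
  obtain t2 where t2: "t1 \<le> t2" "t2 \<le> tb" "Ft r1 r2 h q1 q2 t2 = 0"
    using IVT'[of "\<lambda>t. Ft r1 r2 h q1 q2 t" t1 0 tb] Fc Fd t1 Ft_cont[of t1 tb] t1g by auto
  have t12: "t1 < t2" using t2 Fc by (cases "t1 = t2") auto
  have t2g: "t2 > 1" using t12 t1g by simp
  have al2_2: "al r2 t2 \<ge> 0" using al_mono[of t0 t2 r2] t0 t1 t2 by simp
  have al1_2: "al r1 t2 \<ge> 0" using al_anti[of t2 r1 r2] al2_2 r t2g by simp
  have "tree_rho r1 r2 h' q1' q2' \<le> lam t1"
    using rho_upper[OF hq' t1g assms(1) r2 al1_1 al2_1 t1(3)] .
  also have "lam t1 < lam t2" using lam_strict[of t1 t2] t1g t12 by simp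
  also have "lam t2 \<le> tree_rho r1 r2 h q1 q2"
    using rho_lower[OF hq t2g assms(1) r2 al1_2 al2_2 t2(3)] .
  finally show ?thesis .
qed


end
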